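(* For every $d\ge1$ and every $\mathbf{u}\in\binom{\mathbb{N}}{d}$ one has $\mathrm{Inc}(C(\mathbf{u}))=C(\mathbf{u}+\mathbf{1})$.
   Context: $\mathbb{N}=\{1,2,3,\dots\}$. For $d\ge1$, $\binom{\mathbb{N}}{d}$ is the set of $d$-element subsets of $\mathbb{N}$; an element is written $\mathbf{u}=(u_1,\ldots,u_d)$ with $u_1<\cdots<u_d$. The squashed order on $\binom{\mathbb{N}}{d}$: $\mathbf{u}<\mathbf{v}$ iff the largest element of the symmetric difference $(\mathbf{u}\setminus\mathbf{v})\cup(\mathbf{v}\setminus\mathbf{u})$ belongs to $\mathbf{v}$. For $\mathbf{u}\in\binom{\mathbb{N}}{d}$, $C(\mathbf{u})=\{\mathbf{v}\in\binom{\mathbb{N}}{d}\mid \mathbf{v}\le\mathbf{u}\}$ (squashed order), and $\mathbf{u}+\mathbf{1}=(u_1+1,\ldots,u_d+1)$. Let $\mathrm{Inc}_1$ be the set of maps $\pi\colon\mathbb{N}\to\mathbb{N}$ with $\pi(j)<\pi(j+1)$ and $\pi(j)\le j+1$ for all $j\ge1$, acting by $\pi(\mathbf{u})=(\pi(u_1),\ldots,\pi(u_d))$. For $\mathcal{F}\subseteq\binom{\mathbb{N}}{d}$, $\mathrm{Inc}(\mathcal{F})=\{\pi(\mathbf{u})\mid \mathbf{u}\in\mathcal{F},\ \pi\in\mathrm{Inc}_1\}$. *)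

theory Defs
  imports Main
begin

definition dsubsets :: "nat \<Rightarrow> nat set set" where
  "dsubsets d = {u. finite u \<and> card u = d \<and> (\<forall>x\<in>u. 1 \<le> x)}"

definition squashed_less :: "nat set \<Rightarrow> nat set \<Rightarrow> bool" where
  "squashed_less u v \<longleftrightarrow> u \<noteq> v \<and> Max ((u - v) \<union> (v - u)) \<in> v"

definition squashed_le :: "nat set \<Rightarrow> nat set \<Rightarrow> bool" where
  "squashed_le u v \<longleftrightarrow> u = v \<or> squashed_less u v"

definition Cset :: "nat \<Rightarrow> nat set \<Rightarrow> nat set set" where
  "Cset d u = {v \<in> dsubsets d. squashed_le v u}"

definition shift1 :: "nat set \<Rightarrow> nat set" where
  "shift1 u = (\<lambda>x. x + 1) ` u"

text \<open>Inc_1: maps N -> N (values at 0 irrelevant) with pi(j) < pi(j+1) and pi(j) <= j+1.\<close>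
definition Inc1 :: "(nat \<Rightarrow> nat) set" where
  "Inc1 = {\<pi>. \<forall>j\<ge>1. 1 \<le> \<pi> j \<and> \<pi> j < \<pi> (j + 1) \<and> \<pi> j \<le> j + 1}"

definition Inc :: "nat set set \<Rightarrow> nat set set" where
  "Inc F = {\<pi> ` u | u \<pi>. u \<in> F \<and> \<pi> \<in> Inc1}"

end

theory Submission
  imports Defs
begin

definition bin :: "nat set \<Rightarrow> nat" where "bin A = (\<Sum>x\<in>A. 2^x)"

lemma lo_bound: "A \<subseteq> {..<t} \<Longrightarrow> bin A < 2^t"
proof (induction t arbitrary: A)
  case 0 then show ?case by (simp add: bin_def)
next
  case (Suc t)
  have fin: "finite A" using Suc.prems finite_subset by blast
  have "A - {t} \<subseteq> {..<t}" using Suc.prems by auto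
  then have IH: "bin (A - {t}) < 2^t" using Suc.IH by blast
  have "bin A \<le> bin (A - {t}) + 2^t"
  proof (cases "t \<in> A")
    case True
    then show ?thesis using fin by (simp add: bin_def sum.remove)
  next
    case False
    then show ?thesis by (simp add: bin_def)
  qed
  then show ?case using IH by simp
qed

lemma bin_less:
  assumes "finite u" "finite v" "u \<noteq> v" "Max ((u - v) \<union> (v - u)) \<in> v"
  shows "bin u < bin v"
proof -
  define S where "S = (u - v) \<union> (v - u)"
  define M where "M = Max S"
  have fS: "finite S" using assms S_def by auto
  have neS: "S \<noteq> {}" using assms(3) S_def by auto
  have MS: "M \<in> S" using fS neS M_def by auto
  have Mv: "M \<in> v - u" using MS assms(4) S_def M_def by auto
  have "u - v \<subseteq> {..<M}"
  proof
    fix x assume "x \<in> u - v"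
    then have "x \<in> S" "x \<noteq> M" using Mv S_def by auto
    then have "x \<le> M" "x \<noteq> M" using fS M_def by auto
    then show "x \<in> {..<M}" by auto
  qed
  then have a: "bin (u - v) < 2^M" by (rule lo_bound)
  have b: "2^M \<le> bin (v - u)" unfolding bin_def
    using Mv assms(2) by (intro member_le_sum) auto
  have "bin u = bin (u \<inter> v) + bin (u - v)" unfolding bin_def using assms(1) by (rule sum.Int_Diff)
  moreover have "bin v = bin (v \<inter> u) + bin (v - u)" unfolding bin_def using assms(2) by (rule sum.Int_Diff)
  moreover have "v \<inter> u = u \<inter> v" by auto
  ultimately have "bin u = bin (u \<inter> v) + bin (u - v)" "bin v = bin (u \<inter> v) + bin (v - u)" by auto
  then show ?thesis using a b by linarith
qed

lemma squashed_less_iff: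
  assumes "finite u" "finite v"
  shows "squashed_less u v \<longleftrightarrow> bin u < bin v"
proof
  assume "squashed_less u v" then show "bin u < bin v"
    using bin_less assms unfolding squashed_less_def by blast
next
  assume l: "bin u < bin v"
  then have ne: "u \<noteq> v" by auto
  define S where "S = (u - v) \<union> (v - u)"
  have fS: "finite S" using assms S_def by auto
  have neS: "S \<noteq> {}" using ne S_def by auto
  have MS: "Max S \<in> S" using fS neS by auto
  show "squashed_less u v"
  proof (rule ccontr)
    assume "\<not> squashed_less u v"
    then have "Max S \<notin> v" using ne S_def unfolding squashed_less_def by auto
    then have "Max ((v - u) \<union> (u - v)) \<in> u" using MS S_def by (auto simp: Un_commute)
    then have "bin v < bin u" using bin_less assms ne by metis
    then show False using l by simp
  qed
qed

lemma bin_inj: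
  assumes "finite u" "finite v" "bin u = bin v" shows "u = v"
proof (rule ccontr)
  assume ne: "u \<noteq> v"
  have "squashed_less u v \<or> squashed_less v u"
  proof -
    define S where "S = (u - v) \<union> (v - u)"
    have fS: "finite S" using assms S_def by auto
    have neS: "S \<noteq> {}" using ne S_def by auto
    have MS: "Max S \<in> S" using fS neS by auto
    have "S = (v - u) \<union> (u - v)" using S_def by auto
    then show ?thesis using MS ne S_def unfolding squashed_less_def by auto
  qed
  then show False using squashed_less_iff[OF assms(1,2)] squashed_less_iff[OF assms(2,1)] assms(3) by simp
qed

lemma squashed_le_iff: assumes "finite u" "finite v" shows "squashed_le u v \<longleftrightarrow> bin u \<le> bin v"
proof -
  have "bin u \<le> bin v \<longleftrightarrow> bin u = bin v \<or> bin u < bin v" by auto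
  then show ?thesis unfolding squashed_le_def using squashed_less_iff[OF assms] bin_inj[OF assms] by blast
qed

lemma bin_mono_map:
  fixes v :: "nat set" and f g :: "nat \<Rightarrow> nat"
  assumes "finite v"
  shows "(\<forall>x\<in>v. \<forall>y\<in>v. x < y \<longrightarrow> f x < f y) \<longrightarrow> (\<forall>x\<in>v. \<forall>y\<in>v. x < y \<longrightarrow> g x < g y)
     \<longrightarrow> (\<forall>x\<in>v. f x \<le> g x) \<longrightarrow> bin (f ` v) \<le> bin (g ` v)"
  using assms
proof (induction v rule: finite_linorder_max_induct[case_names empty step])
  case empty then show ?case by (simp add: bin_def)
next
  case (step b A)
  show ?case
  proof (intro impI)
    assume f: "\<forall>x\<in>insert b A. \<forall>y\<in>insert b A. x < y \<longrightarrow> f x < f y"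
      and g: "\<forall>x\<in>insert b A. \<forall>y\<in>insert b A. x < y \<longrightarrow> g x < g y"
      and fg: "\<forall>x\<in>insert b A. f x \<le> g x"
    have IH: "bin (f ` A) \<le> bin (g ` A)" using step f g fg by auto
    have fA: "f ` A \<subseteq> {..<f b}" using f step(2) by auto
    have gA: "g ` A \<subseteq> {..<g b}" using g step(2) by auto
    have fb: "f b \<notin> f ` A" using fA by auto
    have gb: "g b \<notin> g ` A" using gA by auto
    have ef: "bin (f ` insert b A) = 2 ^ f b + bin (f ` A)" using fb step(1) by (simp add: bin_def)
    have eg: "bin (g ` insert b A) = 2 ^ g b + bin (g ` A)" using gb step(1) by (simp add: bin_def)
    have lf: "bin (f ` A) < 2 ^ f b" using fA by (rule lo_bound)
    have fgb: "f b \<le> g b" using fg by auto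
    show "bin (f ` insert b A) \<le> bin (g ` insert b A)"
    proof (cases "f b = g b")
      case True then show ?thesis using ef eg IH by simp
    next
      case False
      then have "Suc (f b) \<le> g b" using fgb by simp
      then have "2 ^ Suc (f b) \<le> (2::nat) ^ g b" by (rule power_increasing) simp
      then show ?thesis using ef eg lf by simp
    qed
  qed
qed

lemma Inc1_mono: assumes "\<pi> \<in> Inc1" "1 \<le> x" "x < y" shows "\<pi> x < \<pi> y"
  using assms(3)
proof (induction y)
  case 0 then show ?case by simp
next
  case (Suc y)
  have step: "\<pi> y < \<pi> (Suc y)" using assms(1,2) Suc.prems unfolding Inc1_def by auto
  show ?case
  proof (cases "x = y")
    case True then show ?thesis using step by simp
  next
    case False then have "x < y" using Suc.prems by simp
    then show ?thesis using Suc.IH step by simp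
  qed
qed

lemma bin_shift: "finite v \<Longrightarrow> bin ((\<lambda>x. x + 1) ` v) = 2 * bin v"
  unfolding bin_def by (simp add: sum.reindex sum_distrib_left)

lemma bin_split:
  assumes "finite A" shows "bin A = bin {x\<in>A. x < t} + bin {x\<in>A. t \<le> x}"
proof -
  have "A = {x\<in>A. x < t} \<union> {x\<in>A. t \<le> x}" by auto
  moreover have "{x\<in>A. x < t} \<inter> {x\<in>A. t \<le> x} = {}" by auto
  ultimately show ?thesis unfolding bin_def using assms
    by (metis (no_types, lifting) finite_Un sum.union_disjoint)
qed

lemma hi_dvd: assumes "H \<subseteq> {t..}" shows "2^t dvd bin H"
  unfolding bin_def
proof (rule dvd_sum)
  fix x assume "x \<in> H" then have "t \<le> x" using assms by auto
  then show "2^t dvd (2::nat)^x" by (rule le_imp_power_dvd)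
qed

lemma key:
  assumes fB: "finite B" and fH: "finite H" and H: "H \<subseteq> {t..}" and L1: "L1 \<subseteq> {..<t}"
    and L2: "L2 \<subseteq> {..<t}" and le: "bin (L1 \<union> H) \<le> bin B"
  shows "bin (L2 \<union> H) < bin B \<or> H = {x\<in>B. t \<le> x}"
proof -
  have fL1: "finite L1" using L1 finite_subset by blast
  have fL2: "finite L2" using L2 finite_subset by blast
  have d1: "L1 \<inter> H = {}" using L1 H by (force simp: subset_iff)
  have d2: "L2 \<inter> H = {}" using L2 H by (force simp: subset_iff)
  have e1: "bin (L1 \<union> H) = bin L1 + bin H" unfolding bin_def using fL1 fH d1 by (rule sum.union_disjoint)
  have e2: "bin (L2 \<union> H) = bin L2 + bin H" unfolding bin_def using fL2 fH d2 by (rule sum.union_disjoint)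
  have eB: "bin B = bin {x\<in>B. x < t} + bin {x\<in>B. t \<le> x}" using fB by (rule bin_split)
  have bL2: "bin L2 < 2^t" using L2 by (rule lo_bound)
  have bBl: "bin {x\<in>B. x < t} < 2^t" by (rule lo_bound) auto
  obtain p where p: "bin H = 2^t * p" using hi_dvd[OF H] by blast
  obtain q where q: "bin {x\<in>B. t \<le> x} = 2^t * q" using hi_dvd[of "{x\<in>B. t \<le> x}" t] by auto
  consider "p < q" | "p = q" | "q < p" by linarith
  then show ?thesis
  proof cases
    case 1
    then have "2^t * (p + 1) \<le> (2::nat)^t * q" by (intro mult_le_mono2) simp
    then show ?thesis using e2 eB bL2 p q by (simp add: algebra_simps)
  next
    case 2
    then have "bin H = bin {x\<in>B. t \<le> x}" using p q by simp
    then show ?thesis using bin_inj fH fB by auto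
  next
    case 3
    then have "2^t * (q + 1) \<le> (2::nat)^t * p" by (intro mult_le_mono2) simp
    then show ?thesis using e1 eB bBl p q le by (simp add: algebra_simps)
  qed
qed

lemma Inc1_inj: "\<pi> \<in> Inc1 \<Longrightarrow> \<forall>x\<in>v. 1 \<le> x \<Longrightarrow> inj_on \<pi> v"
  by (metis Inc1_mono inj_onI linorder_neqE_nat less_irrefl)

lemma Cset_bin: "u \<in> dsubsets d \<Longrightarrow> Cset d u = {v \<in> dsubsets d. bin v \<le> bin u}"
  unfolding Cset_def using squashed_le_iff by (auto simp: dsubsets_def)

lemma shift_dsub: "u \<in> dsubsets d \<Longrightarrow> shift1 u \<in> dsubsets d"
  unfolding dsubsets_def shift1_def by (auto simp: card_image)

theorem lemma3p2:
  fixes d :: nat and u :: "nat set"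
  assumes "d \<ge> 1" and "u \<in> dsubsets d"
  shows "Inc (Cset d u) = Cset d (shift1 u)"
proof -
  have fu: "finite u" using assms(2) by (simp add: dsubsets_def)
  have su: "shift1 u \<in> dsubsets d" using assms(2) by (rule shift_dsub)
  have bsu: "bin (shift1 u) = 2 * bin u" unfolding shift1_def using fu by (rule bin_shift)
  have A: "Inc (Cset d u) \<subseteq> Cset d (shift1 u)"
  proof
    fix w assume "w \<in> Inc (Cset d u)"
    then obtain v \<pi> where w: "w = \<pi> ` v" and v: "v \<in> Cset d u" and p: "\<pi> \<in> Inc1"
      unfolding Inc_def by blast
    have vd: "v \<in> dsubsets d" and bv: "bin v \<le> bin u" using v Cset_bin[OF assms(2)] by auto
    have fv: "finite v" and cv: "card v = d" and gv: "\<forall>x\<in>v. 1 \<le> x" using vd by (auto simp: dsubsets_def)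
    have inj: "inj_on \<pi> v" using Inc1_inj[OF p gv] .
    have wd: "w \<in> dsubsets d" unfolding dsubsets_def w using fv cv inj gv p
      by (auto simp: card_image Inc1_def)
    have "bin (\<pi> ` v) \<le> bin ((\<lambda>x. x + 1) ` v)"
      using bin_mono_map[OF fv, of \<pi> "\<lambda>x. x + 1"] Inc1_mono[OF p] gv p by (auto simp: Inc1_def)
    also have "\<dots> = 2 * bin v" using fv by (rule bin_shift)
    finally have "bin w \<le> bin (shift1 u)" using w bsu bv by simp
    then show "w \<in> Cset d (shift1 u)" using wd Cset_bin[OF su] by simp
  qed
  have B: "Cset d (shift1 u) \<subseteq> Inc (Cset d u)"
  proof
    fix w assume "w \<in> Cset d (shift1 u)"
    then have wd: "w \<in> dsubsets d" and bw: "bin w \<le> bin (shift1 u)" using Cset_bin[OF su] by auto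
    have fw: "finite w" and cw: "card w = d" and gw: "\<forall>x\<in>w. 1 \<le> x" using wd by (auto simp: dsubsets_def)
    show "w \<in> Inc (Cset d u)"
    proof (cases "1 \<in> w")
      case False
      define v where "v = (\<lambda>x. x - 1) ` w"
      have g2: "\<forall>x\<in>w. 2 \<le> x" using gw False by (metis One_nat_def Suc_1 Suc_leI le_neq_implies_less)
      have "(\<lambda>x. x - 1 + 1) ` w = (\<lambda>x. x) ` w" by (rule image_cong) (use g2 in auto)
      then have sv: "(\<lambda>x. x + 1) ` v = w" unfolding v_def image_image by simp
      have inj: "inj_on (\<lambda>x. x - 1) w" by (rule inj_onI) (use g2 in force)
      have vd: "v \<in> dsubsets d" unfolding dsubsets_def v_def using fw cw inj g2
        by (force simp: card_image)
      have fv: "finite v" using vd by (simp add: dsubsets_def)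
      have "2 * bin v \<le> 2 * bin u" using bin_shift[OF fv] sv bw bsu by simp
      then have "v \<in> Cset d u" using vd Cset_bin[OF assms(2)] by simp
      moreover have "(\<lambda>x. x + 1) \<in> Inc1" by (simp add: Inc1_def)
      ultimately show ?thesis unfolding Inc_def using sv by blast
    next
      case True
      have ex: "\<exists>n. 1 \<le> n \<and> n \<notin> w"
      proof -
        have "Suc (Max w) \<notin> w" using Max_ge[OF fw, of "Suc (Max w)"] by auto
        then show ?thesis by (intro exI[of _ "Suc (Max w)"]) simp
      qed
      define a where "a = (LEAST n. 1 \<le> n \<and> n \<notin> w)"
      have a1: "1 \<le> a" "a \<notin> w" using LeastI_ex[OF ex] unfolding a_def by auto
      have below: "{1..<a} \<subseteq> w"
      proof
        fix x assume x: "x \<in> {1..<a}"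
        then have "x < (LEAST n. 1 \<le> n \<and> n \<notin> w)" using a_def by simp
        then have "\<not> (1 \<le> x \<and> x \<notin> w)" by (rule not_less_Least)
        then show "x \<in> w" using x by auto
      qed
      have a2: "2 \<le> a" using True a1 by (cases "a = 1") auto
      define H where "H = {x\<in>w. a < x}"
      have wsplit: "w = {1..<a} \<union> H"
      proof
        show "w \<subseteq> {1..<a} \<union> H"
        proof
          fix x assume x: "x \<in> w"
          then have "1 \<le> x" "x \<noteq> a" using gw a1 by auto
          then show "x \<in> {1..<a} \<union> H" using x H_def by auto
        qed
        show "{1..<a} \<union> H \<subseteq> w" using below H_def by auto
      qed
      define \<rho> where "\<rho> = (\<lambda>x::nat. x - 1)"
      define v where "v = {1..<a} \<union> \<rho> ` H"
      define \<pi> where "\<pi> = (\<lambda>j::nat. if j < a then j else j + 1)"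
      have pI: "\<pi> \<in> Inc1" unfolding Inc1_def \<pi>_def by auto
      have img1: "\<pi> ` {1..<a} = {1..<a}"
      proof -
        have "\<pi> ` {1..<a} = (\<lambda>x. x) ` {1..<a}" by (rule image_cong) (auto simp: \<pi>_def)
        then show ?thesis by simp
      qed
      have img2: "\<pi> ` (\<rho> ` H) = H"
      proof -
        have "(\<lambda>x. \<pi> (\<rho> x)) ` H = (\<lambda>x. x) ` H" by (rule image_cong) (auto simp: \<pi>_def \<rho>_def H_def)
        then show ?thesis by (simp add: image_image)
      qed
      have pv: "\<pi> ` v = w" unfolding v_def image_Un img1 img2 using wsplit by simp
      have fH: "finite H" using fw H_def by simp
      have injr: "inj_on \<rho> H" by (rule inj_onI) (auto simp: \<rho>_def H_def)
      have disj: "{1..<a} \<inter> \<rho> ` H = {}" by (auto simp: \<rho>_def H_def)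
      have disjw: "{1..<a} \<inter> H = {}" by (auto simp: H_def)
      have cardv: "card v = card {1..<a} + card H"
        unfolding v_def using disj fH injr by (simp add: card_Un_disjoint card_image)
      have cardw: "card w = card {1..<a} + card H"
        using wsplit disjw fH card_Un_disjoint by (metis finite_atLeastLessThan)
      have vd: "v \<in> dsubsets d" unfolding dsubsets_def
      proof (intro CollectI conjI)
        show "finite v" unfolding v_def using fH by simp
        show "card v = d" using cardv cardw cw by simp
        show "\<forall>x\<in>v. 1 \<le> x" unfolding v_def \<rho>_def H_def using a2 by auto
      qed
      have fv: "finite v" using vd by (simp add: dsubsets_def)
      have s1: "(\<lambda>x. x + 1) ` {1..<a} = {2..a}"
      proof
        show "(\<lambda>x. x + 1) ` {1..<a} \<subseteq> {2..a}" by auto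
        show "{2..a} \<subseteq> (\<lambda>x. x + 1) ` {1..<a}"
        proof
          fix x assume "x \<in> {2..a}"
          then show "x \<in> (\<lambda>x. x + 1) ` {1..<a}" by (intro image_eqI[of _ _ "x - 1"]) auto
        qed
      qed
      have s2: "(\<lambda>x. x + 1) ` (\<rho> ` H) = H"
      proof -
        have "(\<lambda>x. \<rho> x + 1) ` H = (\<lambda>x. x) ` H" by (rule image_cong) (auto simp: \<rho>_def H_def)
        then show ?thesis by (simp add: image_image)
      qed
      have Sv: "(\<lambda>x. x + 1) ` v = {2..a} \<union> H" unfolding v_def image_Un s1 s2 ..
      have fsu: "finite (shift1 u)" using su by (simp add: dsubsets_def)
      have csu: "card (shift1 u) = d" using su by (simp add: dsubsets_def)
      have "bin ({2..a} \<union> H) < bin (shift1 u) \<or> H = {x\<in>shift1 u. a + 1 \<le> x}"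
      proof (rule key)
        show "finite (shift1 u)" by (rule fsu)
        show "finite H" by (rule fH)
        show "H \<subseteq> {a + 1..}" unfolding H_def by auto
        show "{1..<a} \<subseteq> {..<a + 1}" by auto
        show "{2..a} \<subseteq> {..<a + 1}" by auto
        show "bin ({1..<a} \<union> H) \<le> bin (shift1 u)" using bw wsplit by simp
      qed
      then have "bin ((\<lambda>x. x + 1) ` v) \<le> bin (shift1 u)"
      proof
        assume "bin ({2..a} \<union> H) < bin (shift1 u)"
        then show ?thesis using Sv by simp
      next
        assume Hh: "H = {x\<in>shift1 u. a + 1 \<le> x}"
        define Bl where "Bl = {x\<in>shift1 u. x < a + 1}"
        have Bsplit: "shift1 u = Bl \<union> H" using Hh Bl_def by auto
        have Bdisj: "Bl \<inter> H = {}" using Hh Bl_def by auto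
        have Blsub: "Bl \<subseteq> {2..a}" using assms(2) unfolding Bl_def shift1_def dsubsets_def by auto
        have fBl: "finite Bl" using fsu Bl_def by simp
        have "card (shift1 u) = card Bl + card H" using Bsplit Bdisj fBl fH card_Un_disjoint by metis
        moreover have "card {2..a} = card {1..<a}" using a2 by simp
        ultimately have "card Bl = card {2..a}" using csu cardw cw by simp
        then have "Bl = {2..a}" using Blsub card_subset_eq finite_atLeastAtMost by metis
        then have "shift1 u = (\<lambda>x. x + 1) ` v" using Bsplit Sv by simp
        then show ?thesis by simp
      qed
      then have "2 * bin v \<le> 2 * bin u" using bin_shift[OF fv] bsu by simp
      then have "v \<in> Cset d u" using vd Cset_bin[OF assms(2)] by simp
      then show ?thesis unfolding Inc_def using pv pI by blast
    qed
  qed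
  show ?thesis using A B by blast
qed

end
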